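(* Let $n\in\mathbb N$ and let $\varphi\colon[0,\infty)\to[0,\infty)$ be a continuous increasing function with $\varphi(0)=0$ such that $\liminf_{r\to0^+}\varphi(r)/r^n>0$. Then there exist a continuous increasing function $\varphi^\circ\colon[0,\infty)\to[0,\infty)$ with $\varphi^\circ(0)=0$ and a constant $c=c(n)>0$ such that $r\mapsto\varphi^\circ(r)/r^n$ is non-increasing on $(0,\infty)$ and $$c\,\mathscr H^{\varphi}_\delta(E)\le \mathscr H^{\varphi^\circ}_\delta(E)\le \mathscr H^{\varphi}_\delta(E)$$ for every $\delta\in(0,\infty]$ and every set $E\subset\mathbb R^n$.
   Context: For a continuous increasing function $\phi\colon[0,\infty)\to[0,\infty)$ with $\phi(0)=0$, for $\delta\in(0,\infty]$ and $E\subset\mathbb R^n$, set $\mathscr H^{\phi}_\delta(E)=\inf\{\sum_{i=1}^\infty\phi(d(E_i)) : E_i\subset\mathbb R^n,\ d(E_i)\le\delta,\ E\subset\bigcup_i E_i\}$, where $d(\cdot)$ denotes the diameter. *)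

theory Defs
  imports "HOL-Analysis.Analysis" "HOL-Library.Extended_Nonnegative_Real"
begin

definition ediam :: "'a::metric_space set \<Rightarrow> ereal" where
  "ediam A = (if bounded A then ereal (diameter A) else \<infinity>)"

definition hcost :: "(real \<Rightarrow> real) \<Rightarrow> 'a::metric_space set \<Rightarrow> ennreal" where
  "hcost \<phi> A = (if bounded A then ennreal (\<phi> (diameter A)) else \<infinity>)"

definition hausdorff_content ::
    "(real \<Rightarrow> real) \<Rightarrow> ereal \<Rightarrow> 'a::metric_space set \<Rightarrow> ennreal" where
  "hausdorff_content \<phi> \<delta> E =
     (INF C \<in> {C :: nat \<Rightarrow> 'a set. (\<forall>i. ediam (C i) \<le> \<delta>) \<and> E \<subseteq> (\<Union>i. C i)}.
        (\<Sum>i. hcost \<phi> (C i)))"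

definition gauge_fun :: "(real \<Rightarrow> real) \<Rightarrow> bool" where
  "gauge_fun \<phi> \<longleftrightarrow> continuous_on {0..} \<phi> \<and> mono_on {0..} \<phi> \<and>
     (\<forall>r\<ge>0. \<phi> r \<ge> 0) \<and> \<phi> 0 = 0"

end

theory Submission
  imports Defs
begin


definition gg :: "(real\<Rightarrow>real) \<Rightarrow> nat \<Rightarrow> real \<Rightarrow> real" where
  "gg \<phi> N r = \<phi> r / r ^ N"
definition mm :: "(real\<Rightarrow>real) \<Rightarrow> nat \<Rightarrow> real \<Rightarrow> real" where
  "mm \<phi> N r = Inf (gg \<phi> N ` {0<..r})"
definition phio :: "(real\<Rightarrow>real) \<Rightarrow> nat \<Rightarrow> real \<Rightarrow> real" where
  "phio \<phi> N r = (if r \<le> 0 then 0 else r ^ N * mm \<phi> N r)"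

lemma gg_nonneg: "gauge_fun \<phi> \<Longrightarrow> s > 0 \<Longrightarrow> gg \<phi> N s \<ge> 0"
  unfolding gg_def gauge_fun_def by auto

lemma bdd_gg: "gauge_fun \<phi> \<Longrightarrow> bdd_below (gg \<phi> N ` {0<..r})"
  by (rule bdd_belowI2[where m=0]) (auto intro: gg_nonneg)

lemma mm_le: "gauge_fun \<phi> \<Longrightarrow> 0 < s \<Longrightarrow> s \<le> r \<Longrightarrow> mm \<phi> N r \<le> gg \<phi> N s"
  unfolding mm_def by (rule cInf_lower) (auto intro: bdd_gg)

lemma mm_nonneg: "gauge_fun \<phi> \<Longrightarrow> 0 < r \<Longrightarrow> mm \<phi> N r \<ge> 0"
  unfolding mm_def by (rule cInf_greatest) (auto intro: gg_nonneg)

lemma mm_anti: "gauge_fun \<phi> \<Longrightarrow> 0 < r \<Longrightarrow> r \<le> r' \<Longrightarrow> mm \<phi> N r' \<le> mm \<phi> N r"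
  unfolding mm_def by (rule cInf_superset_mono) (auto intro: bdd_gg)

lemma phio_le: assumes "gauge_fun \<phi>" "r \<ge> 0" shows "phio \<phi> N r \<le> \<phi> r"
proof (cases "r = 0")
  case True then show ?thesis using assms by (simp add: phio_def gauge_fun_def)
next
  case False
  then have r: "r > 0" using assms by simp
  have "r ^ N * mm \<phi> N r \<le> r ^ N * gg \<phi> N r"
    using mm_le[OF assms(1) r order.refl] r by (simp add: mult_left_mono)
  also have "\<dots> = \<phi> r" using r by (simp add: gg_def)
  finally show ?thesis using r by (simp add: phio_def)
qed

lemma phio_nonneg: "gauge_fun \<phi> \<Longrightarrow> phio \<phi> N r \<ge> 0"
  unfolding phio_def using mm_nonneg[of \<phi> r N] by auto

lemma phio_mono: assumes g: "gauge_fun \<phi>" and r: "0 < r" "r \<le> r'"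
  shows "phio \<phi> N r \<le> phio \<phi> N r'"
proof -
  have r': "r' > 0" using r by simp
  have "r ^ N * mm \<phi> N r \<le> r' ^ N * mm \<phi> N r'"
  proof -
    have "r ^ N * mm \<phi> N r / r' ^ N \<le> mm \<phi> N r'"
      unfolding mm_def[of \<phi> N r']
    proof (rule cInf_greatest)
      show "gg \<phi> N ` {0<..r'} \<noteq> {}" using r' by auto
    next
      fix y assume "y \<in> gg \<phi> N ` {0<..r'}"
      then obtain s where s: "0 < s" "s \<le> r'" "y = gg \<phi> N s" by auto
      show "r ^ N * mm \<phi> N r / r' ^ N \<le> y"
      proof (cases "s \<le> r")
        case True
        have "r ^ N * mm \<phi> N r / r' ^ N \<le> r ^ N * mm \<phi> N r / r ^ N"
          using r mm_nonneg[OF g r(1)] 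
          by (intro divide_left_mono mult_nonneg_nonneg power_mono) auto
        also have "\<dots> = mm \<phi> N r" using r by simp
        also have "\<dots> \<le> gg \<phi> N s" using mm_le[OF g s(1) True] .
        finally show ?thesis using s by simp
      next
        case False
        have "r ^ N * mm \<phi> N r \<le> r ^ N * gg \<phi> N r"
          using mm_le[OF g r(1) order.refl] r by (simp add: mult_left_mono)
        also have "\<dots> = \<phi> r" using r by (simp add: gg_def)
        also have "\<dots> \<le> \<phi> s"
        proof -
          have "mono_on {0..} \<phi>" using g unfolding gauge_fun_def by blast
          from mono_onD[OF this] show ?thesis using False r by simp
        qed
        finally have A: "r ^ N * mm \<phi> N r \<le> \<phi> s" .
        have ps: "\<phi> s \<ge> 0" using g s unfolding gauge_fun_def by simp
        have sp: "s ^ N \<le> r' ^ N" using s by (intro power_mono) auto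
        have "\<phi> s / r' ^ N \<le> \<phi> s / s ^ N"
          using ps sp s by (intro divide_left_mono) auto
        moreover have "r ^ N * mm \<phi> N r / r' ^ N \<le> \<phi> s / r' ^ N"
          using A r' by (intro divide_right_mono) auto
        ultimately have "r ^ N * mm \<phi> N r / r' ^ N \<le> \<phi> s / s ^ N" by linarith
        then show ?thesis using s by (simp add: gg_def)
      qed
    qed
    then show ?thesis using r' by (simp add: field_simps)
  qed
  then show ?thesis using r r' by (simp add: phio_def)
qed

lemma phio_upper: assumes g: "gauge_fun \<phi>" and r: "0 < r" "r \<le> r'"
  shows "phio \<phi> N r' \<le> (r'/r)^N * phio \<phi> N r"
proof -
  have r': "r' > 0" using r by simp
  have "r' ^ N * mm \<phi> N r' \<le> r' ^ N * mm \<phi> N r"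
    using mm_anti[OF g r] r' by (simp add: mult_left_mono)
  also have "\<dots> = (r'/r)^N * (r ^ N * mm \<phi> N r)" using r by (simp add: field_simps power_divide)
  finally show ?thesis using r r' by (simp add: phio_def)
qed

lemma phio_cont: assumes g: "gauge_fun \<phi>" shows "continuous_on {0..} (phio \<phi> N)"
  unfolding continuous_on_eq_continuous_within
proof
  fix x :: real assume "x \<in> {0..}"
  then have x: "x \<ge> 0" by simp
  show "continuous (at x within {0..}) (phio \<phi> N)"
  proof (cases "x = 0")
    case True
    have "\<forall>x\<in>{0..}. (\<phi> \<longlongrightarrow> \<phi> x) (at x within {0..})"
      using g unfolding gauge_fun_def continuous_on_def by blast
    from bspec[OF this, of 0] have c: "(\<phi> \<longlongrightarrow> \<phi> 0) (at 0 within {0..})" by simp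
    have "(phio \<phi> N \<longlongrightarrow> 0) (at 0 within {0..})"
    proof (rule tendsto_sandwich[where f="\<lambda>_. 0" and h=\<phi>])
      show "\<forall>\<^sub>F y in at 0 within {0..}. 0 \<le> phio \<phi> N y" using phio_nonneg[OF g] by simp
      show "\<forall>\<^sub>F y in at 0 within {0..}. phio \<phi> N y \<le> \<phi> y"
        unfolding eventually_at_filter using phio_le[OF g] by simp
      show "((\<lambda>_. 0) \<longlongrightarrow> (0::real)) (at 0 within {0..})" by simp
      have "\<phi> 0 = 0" using g unfolding gauge_fun_def by blast
      then show "(\<phi> \<longlongrightarrow> 0) (at 0 within {0..})" using c by simp
    qed
    then show ?thesis using True by (simp add: continuous_within phio_def)
  next
    case False
    then have xp: "x > 0" using x by simp
    have ev: "\<forall>\<^sub>F y in at x. y > 0"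
      using order_tendstoD(1)[OF tendsto_ident_at xp] .
    have "(phio \<phi> N \<longlongrightarrow> phio \<phi> N x) (at x)"
    proof (rule tendsto_sandwich[where f="\<lambda>y. min 1 ((y/x)^N) * phio \<phi> N x"
          and h="\<lambda>y. max 1 ((y/x)^N) * phio \<phi> N x"])
      show "\<forall>\<^sub>F y in at x. min 1 ((y/x)^N) * phio \<phi> N x \<le> phio \<phi> N y"
        using ev
      proof eventually_elim
        case (elim y)
        show ?case
        proof (cases "x \<le> y")
          case True
          have "min 1 ((y/x)^N) * phio \<phi> N x \<le> 1 * phio \<phi> N x"
            using phio_nonneg[OF g] by (intro mult_right_mono) auto
          then show ?thesis using phio_mono[OF g xp True, of N] by linarith
        next
          case False
          have "phio \<phi> N x \<le> (x/y)^N * phio \<phi> N y" using phio_upper[OF g elim, of x N] False by simp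
          then have "(y/x)^N * phio \<phi> N x \<le> (y/x)^N * ((x/y)^N * phio \<phi> N y)"
            using elim xp by (intro mult_left_mono) auto
          also have "\<dots> = phio \<phi> N y" using elim xp by (simp add: field_simps power_divide)
          finally have "(y/x)^N * phio \<phi> N x \<le> phio \<phi> N y" .
          moreover have "min 1 ((y/x)^N) * phio \<phi> N x \<le> (y/x)^N * phio \<phi> N x"
            using phio_nonneg[OF g] by (intro mult_right_mono) auto
          ultimately show ?thesis by linarith
        qed
      qed
      show "\<forall>\<^sub>F y in at x. phio \<phi> N y \<le> max 1 ((y/x)^N) * phio \<phi> N x"
        using ev
      proof eventually_elim
        case (elim y)
        show ?case
        proof (cases "x \<le> y")
          case True
          have "phio \<phi> N y \<le> (y/x)^N * phio \<phi> N x" using phio_upper[OF g xp True, of N] .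
          moreover have "(y/x)^N * phio \<phi> N x \<le> max 1 ((y/x)^N) * phio \<phi> N x"
            using phio_nonneg[OF g] by (intro mult_right_mono) auto
          ultimately show ?thesis by linarith
        next
          case False
          have "phio \<phi> N y \<le> 1 * phio \<phi> N x" using phio_mono[OF g elim, of x N] False by simp
          also have "\<dots> \<le> max 1 ((y/x)^N) * phio \<phi> N x"
            using phio_nonneg[OF g] by (intro mult_right_mono) auto
          finally show ?thesis .
        qed
      qed
      have "((\<lambda>y. min 1 ((y/x)^N) * phio \<phi> N x) \<longlongrightarrow> min 1 ((x/x)^N) * phio \<phi> N x) (at x)"
        by (intro tendsto_intros) (use xp in auto)
      then show "((\<lambda>y. min 1 ((y/x)^N) * phio \<phi> N x) \<longlongrightarrow> phio \<phi> N x) (at x)" using xp by simp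
      have "((\<lambda>y. max 1 ((y/x)^N) * phio \<phi> N x) \<longlongrightarrow> max 1 ((x/x)^N) * phio \<phi> N x) (at x)"
        by (intro tendsto_intros) (use xp in auto)
      then show "((\<lambda>y. max 1 ((y/x)^N) * phio \<phi> N x) \<longlongrightarrow> phio \<phi> N x) (at x)" using xp by simp
    qed
    then show ?thesis by (simp add: continuous_at continuous_at_imp_continuous_at_within)
  qed
qed

lemma phio_gauge: assumes g: "gauge_fun \<phi>" shows "gauge_fun (phio \<phi> N)"
  unfolding gauge_fun_def
proof (intro conjI allI impI)
  show "continuous_on {0..} (phio \<phi> N)" by (rule phio_cont[OF g])
  show "mono_on {0..} (phio \<phi> N)"
  proof (rule mono_onI)
    fix r s :: real assume "r \<in> {0..}" "s \<in> {0..}" "r \<le> s"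
    then show "phio \<phi> N r \<le> phio \<phi> N s"
      using phio_mono[OF g, of r s N] phio_nonneg[OF g, of N s]
      by (cases "r = 0") (auto simp: phio_def)
  qed
  show "\<And>r. 0 \<le> r \<Longrightarrow> 0 \<le> phio \<phi> N r" using phio_nonneg[OF g] by simp
  show "phio \<phi> N 0 = 0" by (simp add: phio_def)
qed

lemma phio_anti: assumes g: "gauge_fun \<phi>" shows "antimono_on {0<..} (\<lambda>r. phio \<phi> N r / r ^ N)"
  unfolding monotone_on_def
proof (intro ballI impI)
  fix r s :: real assume "r \<in> {0<..}" "s \<in> {0<..}" "r \<le> s"
  then show "phio \<phi> N s / s ^ N \<le> phio \<phi> N r / r ^ N"
    using mm_anti[OF g, of r s N] by (simp add: phio_def)
qed



lemma grid_cover: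
  fixes A :: "(real ^ 'n::finite) set"
  assumes bA: "bounded A" and s: "0 < s" "s \<le> diameter A"
  shows "\<exists>D::nat \<Rightarrow> (real^'n) set. \<exists>M::nat. (\<forall>j. D j \<subseteq> A) \<and> A \<subseteq> (\<Union>j. D j) \<and>
     (\<forall>j. diameter (D j) \<le> s) \<and> (\<forall>j\<ge>M. D j = {}) \<and>
     real M \<le> (5 * real CARD('n)) ^ CARD('n) * (diameter A / s) ^ CARD('n)"
proof -
  define N where "N = CARD('n)"
  define d where "d = diameter A"
  have N1: "N \<ge> 1" unfolding N_def by (simp add: Suc_le_eq)
  have dpos: "d > 0" using s unfolding d_def by simp
  have "A \<noteq> {}" using dpos unfolding d_def by auto
  then obtain a where a: "a \<in> A" by auto
  define h where "h = s / N"
  have hpos: "h > 0" using s N1 unfolding h_def by simp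
  define L where "L = \<lceil>d / h\<rceil>"
  define q where "q = (\<lambda>x::real^'n. \<lambda>j. \<lfloor>(x$j - a$j) / h\<rfloor>)"
  define I where "I = Pi\<^sub>E UNIV (\<lambda>_::'n. {-L..L})"
  have finI: "finite I" unfolding I_def by (intro finite_PiE) auto
  have cardI: "card I = nat (2*L+1) ^ N"
    unfolding I_def N_def by (simp add: card_PiE)
  have qI: "q x \<in> I" if x: "x \<in> A" for x
  proof -
    have "q x j \<in> {-L..L}" for j
    proof -
      have "\<bar>x$j - a$j\<bar> \<le> d"
      proof -
        have "\<bar>(x - a)$j\<bar> \<le> norm (x - a)" by (rule component_le_norm_cart)
        also have "\<dots> = dist x a" by (simp add: dist_norm)
        also have "\<dots> \<le> d" unfolding d_def by (rule diameter_bounded_bound[OF bA x a])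
        finally show ?thesis by simp
      qed
      then have u: "-d \<le> x$j - a$j" "x$j - a$j \<le> d" by (auto simp: abs_le_iff)
      have "(-d)/h \<le> (x$j - a$j)/h" using u(1) hpos by (intro divide_right_mono) auto
      moreover have "(x$j - a$j)/h \<le> d/h" using u(2) hpos by (intro divide_right_mono) auto
      ultimately have "-(d/h) \<le> (x$j - a$j)/h" "(x$j - a$j)/h \<le> d/h" by auto
      then have "\<lfloor>-(d/h)\<rfloor> \<le> q x j" "q x j \<le> \<lfloor>d/h\<rfloor>"
        unfolding q_def by (auto intro: floor_mono)
      moreover have "\<lfloor>d/h\<rfloor> \<le> L" unfolding L_def by (rule floor_le_ceiling)
      moreover have "\<lfloor>-(d/h)\<rfloor> = - L" unfolding L_def by (simp add: floor_minus)
      ultimately show ?thesis by auto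
    qed
    then show ?thesis unfolding I_def by auto
  qed
  obtain e where e: "bij_betw e {0..<card I} I" using ex_bij_betw_nat_finite[OF finI] by blast
  define M where "M = card I"
  define D where "D = (\<lambda>j. if j < M then {x\<in>A. q x = e j} else {})"
  have sub: "\<forall>j. D j \<subseteq> A" unfolding D_def by auto
  have cov: "A \<subseteq> (\<Union>j. D j)"
  proof
    fix x assume x: "x \<in> A"
    have "q x \<in> e ` {0..<card I}" using qI[OF x] e by (simp add: bij_betw_def)
    then obtain j where "j < M" "q x = e j" unfolding M_def by auto
    then show "x \<in> (\<Union>j. D j)" using x unfolding D_def by auto
  qed
  have diam: "\<forall>j. diameter (D j) \<le> s"
  proof
    fix j
    show "diameter (D j) \<le> s"
    proof (rule diameter_le)
      show "D j \<noteq> {} \<or> 0 \<le> s" using s by simp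
    next
      fix x y assume xy: "x \<in> D j" "y \<in> D j"
      then have qe: "q x = q y" unfolding D_def by (auto split: if_splits)
      have "\<bar>(x - y)$i\<bar> \<le> h" for i
      proof -
        have "\<lfloor>(x$i - a$i) / h\<rfloor> = \<lfloor>(y$i - a$i) / h\<rfloor>" using fun_cong[OF qe, of i] unfolding q_def by simp
        from floor_eq_imp_diff_1[OF this]
        have "\<bar>(x$i - a$i) / h - (y$i - a$i) / h\<bar> < 1" .
        moreover have "(x$i - a$i) / h - (y$i - a$i) / h = (x$i - y$i) / h"
          by (simp add: diff_divide_distrib)
        ultimately have "\<bar>(x$i - y$i) / h\<bar> < 1" by simp
        then have "\<bar>x$i - y$i\<bar> / \<bar>h\<bar> < 1" by (simp only: abs_divide)
        then have "\<bar>x$i - y$i\<bar> < h" using hpos by (simp add: divide_less_eq)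
        then show ?thesis by simp
      qed
      then have "(\<Sum>i\<in>UNIV. \<bar>(x - y)$i\<bar>) \<le> (\<Sum>i\<in>(UNIV::'n set). h)" by (meson sum_mono)
      then have "norm (x - y) \<le> (\<Sum>i\<in>(UNIV::'n set). h)"
        using norm_le_l1_cart[of "x - y"] by linarith
      also have "\<dots> = s" using N1 unfolding h_def N_def by simp
      finally show "norm (x - y) \<le> s" .
    qed
  qed
  have emp: "\<forall>j\<ge>M. D j = {}" unfolding D_def by auto
  have dh: "d / h = d * N / s" unfolding h_def using N1 s by (simp add: field_simps)
  have Lb: "real_of_int L \<le> d * N / s + 1" unfolding L_def
    using of_int_ceiling_le_add_one[of "d/h"] dh by simp
  have "s * 1 \<le> d * real N" using s N1 unfolding d_def by (intro mult_mono) auto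
  then have ratio: "d * N / s \<ge> 1" using s by (simp add: le_divide_eq)
  have dhp: "d / h > 0" using dpos hpos by simp
  have L0: "L \<ge> 0" unfolding L_def using dhp by simp
  have "real (nat (2*L+1)) = 2 * real_of_int L + 1" using L0 by simp
  also have "\<dots> \<le> 5 * (d * N / s)" using Lb ratio by linarith
  also have "\<dots> = 5 * N * (d / s)" by simp
  finally have b1: "real (nat (2*L+1)) \<le> 5 * N * (d / s)" .
  have "real M = real (nat (2*L+1)) ^ N" unfolding M_def cardI by simp
  also have "\<dots> \<le> (5 * N * (d / s)) ^ N" by (intro power_mono b1) simp
  also have "\<dots> = (5 * real N) ^ N * (d / s) ^ N" by (simp only: of_nat_mult of_nat_numeral power_mult_distrib[symmetric])
  finally have "real M \<le> (5 * real N) ^ N * (d / s) ^ N" .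
  then show ?thesis using sub cov diam emp unfolding N_def d_def by blast
qed



lemma ediam_mono: "B \<subseteq> A \<Longrightarrow> ediam B \<le> ediam A"
  unfolding ediam_def using bounded_subset diameter_subset by auto

lemma hcost_empty: "gauge_fun \<phi> \<Longrightarrow> hcost \<phi> {} = 0"
  unfolding hcost_def gauge_fun_def by simp

lemma hcost_le: "(\<forall>r\<ge>0. \<psi> r \<le> \<phi> r) \<Longrightarrow> hcost \<psi> A \<le> hcost \<phi> A"
  unfolding hcost_def by (auto intro!: ennreal_leI diameter_ge_0)

lemma content_mono:
  assumes "\<forall>r\<ge>0. \<psi> r \<le> \<phi> r"
  shows "hausdorff_content \<psi> \<delta> E \<le> hausdorff_content \<phi> \<delta> E"
  unfolding hausdorff_content_def
proof (rule INF_mono)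
  fix C assume "C \<in> {C :: nat \<Rightarrow> 'a set. (\<forall>i. ediam (C i) \<le> \<delta>) \<and> E \<subseteq> (\<Union>i. C i)}"
  moreover have "(\<Sum>i. hcost \<psi> (C i)) \<le> (\<Sum>i. hcost \<phi> (C i))"
    by (intro suminf_le summableI hcost_le[OF assms])
  ultimately show "\<exists>C'\<in>{C :: nat \<Rightarrow> 'a set. (\<forall>i. ediam (C i) \<le> \<delta>) \<and> E \<subseteq> (\<Union>i. C i)}.
      (\<Sum>i. hcost \<psi> (C' i)) \<le> (\<Sum>i. hcost \<phi> (C i))" by blast
qed

lemma mm_pos:
  assumes g: "gauge_fun \<phi>" and lim: "Liminf (at_right 0) (\<lambda>r. ereal (\<phi> r / r ^ N)) > 0"
    and d: "d > 0"
  shows "mm \<phi> N d > 0"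
proof -
  obtain a where a: "0 < ereal a" "ereal a < Liminf (at_right 0) (\<lambda>r. ereal (\<phi> r / r ^ N))"
    using ereal_dense2[OF lim] by blast
  have apos: "a > 0" using a(1) by simp
  have "\<forall>\<^sub>F r in at_right 0. ereal a < ereal (\<phi> r / r ^ N)" by (rule less_LiminfD[OF a(2)])
  then have "\<forall>\<^sub>F r in at_right (0::real). a < \<phi> r / r ^ N" by simp
  then obtain b where b: "b > 0" "\<And>y. y > 0 \<Longrightarrow> y < b \<Longrightarrow> a < \<phi> y / y ^ N"
    unfolding eventually_at_right_field by blast
  define t where "t = min (b/2) d"
  have t: "t > 0" "t < b" "t \<le> d" using b d unfolding t_def by auto
  have "a < \<phi> t / t ^ N" using b(2)[OF t(1,2)] .
  moreover have "a * t ^ N > 0" using apos t by simp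
  ultimately have pt: "\<phi> t > 0" using t by (simp add: field_simps)
  define \<mu> where "\<mu> = min a (\<phi> t / d ^ N)"
  have mupos: "\<mu> > 0" unfolding \<mu>_def using apos pt d by simp
  have mono: "mono_on {0..} \<phi>" using g unfolding gauge_fun_def by blast
  have "\<mu> \<le> mm \<phi> N d" unfolding mm_def
  proof (rule cInf_greatest)
    show "gg \<phi> N ` {0<..d} \<noteq> {}" using d by auto
  next
    fix y assume "y \<in> gg \<phi> N ` {0<..d}"
    then obtain s where s: "0 < s" "s \<le> d" "y = gg \<phi> N s" by auto
    show "\<mu> \<le> y"
    proof (cases "s < b")
      case True
      then have "a < gg \<phi> N s" using b(2)[OF s(1)] by (simp add: gg_def)
      then show ?thesis unfolding \<mu>_def using s by simp
    next
      case False
      then have ts: "t \<le> s" using t by simp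
      have "\<phi> t \<le> \<phi> s" using mono_onD[OF mono] ts t by simp
      have "\<phi> t / d ^ N \<le> \<phi> t / s ^ N"
        using pt s by (intro divide_left_mono power_mono mult_pos_pos) auto
      also have "\<dots> \<le> \<phi> s / s ^ N" using \<open>\<phi> t \<le> \<phi> s\<close> s by (intro divide_right_mono) auto
      finally show ?thesis unfolding \<mu>_def using s by (simp add: gg_def)
    qed
  qed
  then show ?thesis using mupos by simp
qed



lemma per_set:
  fixes C :: "(real^'n::finite) set" and \<phi> :: "real \<Rightarrow> real"
  assumes g: "gauge_fun \<phi>" and pos: "\<And>d. d > 0 \<Longrightarrow> mm \<phi> CARD('n) d > 0"
  shows "\<exists>D::nat \<Rightarrow> (real^'n) set. (\<forall>j. D j \<subseteq> C) \<and> C \<subseteq> (\<Union>j. D j) \<and>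
     (\<Sum>j. hcost \<phi> (D j)) \<le> ennreal (2 * (5 * real CARD('n)) ^ CARD('n)) * hcost (phio \<phi> CARD('n)) C"
proof -
  define N where "N = CARD('n)"
  define K where "K = (5 * real N) ^ N"
  have Kpos: "K > 0" unfolding K_def N_def by simp
  have mono: "mono_on {0..} \<phi>" and ph0: "\<phi> 0 = 0" and phnn: "\<And>r. r \<ge> 0 \<Longrightarrow> \<phi> r \<ge> 0"
    using g unfolding gauge_fun_def by auto
  have "\<exists>D::nat \<Rightarrow> (real^'n) set. (\<forall>j. D j \<subseteq> C) \<and> C \<subseteq> (\<Union>j. D j) \<and>
     (\<Sum>j. hcost \<phi> (D j)) \<le> ennreal (2 * K) * hcost (phio \<phi> N) C"
  proof (cases "bounded C \<and> diameter C > 0")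
    case False
    define D where "D = (\<lambda>j::nat. if j = 0 then C else {})"
    have sub: "\<forall>j. D j \<subseteq> C" and cov: "C \<subseteq> (\<Union>j. D j)" unfolding D_def by auto
    have "(\<Sum>j. hcost \<phi> (D j)) \<le> ennreal (2 * K) * hcost (phio \<phi> N) C"
    proof (cases "bounded C")
      case False
      then have "hcost (phio \<phi> N) C = top" unfolding hcost_def by simp
      moreover have "ennreal (2 * K) \<noteq> 0" using Kpos by simp
      ultimately have "ennreal (2 * K) * hcost (phio \<phi> N) C = top" by (simp add: ennreal_mult_top)
      then show ?thesis by simp
    next
      case True
      with \<open>\<not> (bounded C \<and> diameter C > 0)\<close> have "diameter C = 0"
        using diameter_ge_0[OF True] by linarith
      then have "\<forall>j. hcost \<phi> (D j) = 0" unfolding D_def hcost_def using True ph0 by auto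
      then show ?thesis by simp
    qed
    then show ?thesis using sub cov by blast
  next
    case True
    then have bC: "bounded C" and dpos: "diameter C > 0" by auto
    define d where "d = diameter C"
    have mpos: "mm \<phi> N d > 0" using pos dpos unfolding d_def N_def by simp
    have "Inf (gg \<phi> N ` {0<..d}) < 2 * mm \<phi> N d" using mpos unfolding mm_def by simp
    then obtain s where s: "s \<in> {0<..d}" "gg \<phi> N s < 2 * mm \<phi> N d"
      using cINF_less_iff[of "{0<..d}" "gg \<phi> N"] bdd_gg[OF g] dpos unfolding d_def by auto
    then have s0: "0 < s" "s \<le> d" by auto
    obtain D M where D: "\<forall>j. D j \<subseteq> C" "C \<subseteq> (\<Union>j. D j)" "\<forall>j. diameter (D j) \<le> s"
      "\<forall>j\<ge>M. D j = {}" "real M \<le> K * (d / s) ^ N"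
      using grid_cover[OF bC, of s] s0 unfolding d_def K_def N_def by blast
    have bD: "bounded (D j)" for j using D(1) bC bounded_subset by blast
    have tm: "hcost \<phi> (D j) \<le> ennreal (\<phi> s)" for j
    proof -
      have "\<phi> (diameter (D j)) \<le> \<phi> s"
        using mono_onD[OF mono, of "diameter (D j)" s] diameter_ge_0[OF bD] D(3) s0 by auto
      then show ?thesis unfolding hcost_def using bD by (simp add: ennreal_leI)
    qed
    have zero: "hcost \<phi> (D j) = 0" if "j \<notin> {..<M}" for j
      using D(4) that hcost_empty[OF g] by simp
    have "(\<Sum>j. hcost \<phi> (D j)) = (\<Sum>j<M. hcost \<phi> (D j))"
      by (rule suminf_finite) (use zero in auto)
    also have "\<dots> \<le> (\<Sum>j<M. ennreal (\<phi> s))" by (intro sum_mono tm)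
    also have "\<dots> = ennreal (\<Sum>j<M. \<phi> s)" by (rule sum_ennreal) (use phnn s0 in auto)
    also have "\<dots> = ennreal (real M * \<phi> s)" by simp
    also have "\<dots> \<le> ennreal (2 * K * phio \<phi> N d)"
    proof (rule ennreal_leI)
      have "real M * \<phi> s \<le> K * (d / s) ^ N * \<phi> s"
        using D(5) phnn s0 by (intro mult_right_mono) auto
      also have "\<dots> = K * d ^ N * gg \<phi> N s" using s0 by (simp add: gg_def power_divide)
      also have "\<dots> \<le> K * d ^ N * (2 * mm \<phi> N d)"
        using s(2) Kpos dpos unfolding d_def by (intro mult_left_mono) auto
      also have "\<dots> = 2 * K * phio \<phi> N d" using dpos unfolding phio_def d_def by simp
      finally show "real M * \<phi> s \<le> 2 * K * phio \<phi> N d" .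
    qed
    also have "\<dots> = ennreal (2 * K) * hcost (phio \<phi> N) C"
      unfolding hcost_def d_def using bC Kpos phio_nonneg[OF g, of N "diameter C"]
      by (simp only: if_True ennreal_mult[symmetric])
    finally show ?thesis using D(1,2) by blast
  qed
  then show ?thesis unfolding K_def N_def .
qed

lemma lower_bound:
  fixes E :: "(real^'n::finite) set" and \<phi> :: "real \<Rightarrow> real"
  assumes g: "gauge_fun \<phi>" and pos: "\<And>d. d > 0 \<Longrightarrow> mm \<phi> CARD('n) d > 0"
  shows "ennreal (1 / (2 * (5 * real CARD('n)) ^ CARD('n))) * hausdorff_content \<phi> \<delta> E
     \<le> hausdorff_content (phio \<phi> CARD('n)) \<delta> E"
proof -
  define K where "K = 2 * (5 * real CARD('n)) ^ CARD('n)"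
  have Kpos: "K > 0" unfolding K_def by simp
  show ?thesis
    unfolding hausdorff_content_def[of "phio \<phi> CARD('n)"] K_def[symmetric]
  proof (rule INF_greatest)
    fix C assume C: "C \<in> {C :: nat \<Rightarrow> (real^'n) set. (\<forall>i. ediam (C i) \<le> \<delta>) \<and> E \<subseteq> (\<Union>i. C i)}"
    have "\<forall>i. \<exists>D::nat \<Rightarrow> (real^'n) set. (\<forall>j. D j \<subseteq> C i) \<and> C i \<subseteq> (\<Union>j. D j) \<and>
       (\<Sum>j. hcost \<phi> (D j)) \<le> ennreal K * hcost (phio \<phi> CARD('n)) (C i)"
      using per_set[OF g pos] unfolding K_def by blast
    then obtain DD where DD: "\<And>i. (\<forall>j. DD i j \<subseteq> C i) \<and> C i \<subseteq> (\<Union>j. DD i j) \<and>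
       (\<Sum>j. hcost \<phi> (DD i j)) \<le> ennreal K * hcost (phio \<phi> CARD('n)) (C i)"
      by metis
    define F where "F = (\<lambda>k. (\<lambda>(i,j). DD i j) (prod_decode k))"
    have Fadm: "F \<in> {C :: nat \<Rightarrow> (real^'n) set. (\<forall>i. ediam (C i) \<le> \<delta>) \<and> E \<subseteq> (\<Union>i. C i)}"
    proof -
      have "ediam (F k) \<le> \<delta>" for k
      proof -
        obtain i j where ij: "prod_decode k = (i, j)" by (cases "prod_decode k")
        have "ediam (F k) \<le> ediam (C i)" unfolding F_def ij using DD[of i] by (auto intro: ediam_mono)
        also have "\<dots> \<le> \<delta>" using C by auto
        finally show ?thesis .
      qed
      moreover have "E \<subseteq> (\<Union>k. F k)"
      proof
        fix x assume "x \<in> E"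
        then obtain i where "x \<in> C i" using C by auto
        then obtain j where "x \<in> DD i j" using DD[of i] by auto
        then have "x \<in> F (prod_encode (i, j))" unfolding F_def by simp
        then show "x \<in> (\<Union>k. F k)" by blast
      qed
      ultimately show ?thesis by blast
    qed
    have "hausdorff_content \<phi> \<delta> E \<le> (\<Sum>k. hcost \<phi> (F k))"
      unfolding hausdorff_content_def by (rule INF_lower[OF Fadm])
    also have "(\<Sum>k. hcost \<phi> (F k)) = (\<Sum>i. \<Sum>j. hcost \<phi> (DD i j))"
      unfolding F_def
      using suminf_ennreal_2dimen[of "\<lambda>i. \<Sum>j. hcost \<phi> (DD i j)" "\<lambda>(i,j). hcost \<phi> (DD i j)"]
      by (simp add: case_prod_beta' split_def)
    also have "\<dots> \<le> (\<Sum>i. ennreal K * hcost (phio \<phi> CARD('n)) (C i))"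
      using DD by (intro suminf_le summableI) auto
    also have "\<dots> = ennreal K * (\<Sum>i. hcost (phio \<phi> CARD('n)) (C i))"
      by (rule ennreal_suminf_cmult)
    finally have H: "hausdorff_content \<phi> \<delta> E \<le> ennreal K * (\<Sum>i. hcost (phio \<phi> CARD('n)) (C i))" .
    have "ennreal (1 / K) * hausdorff_content \<phi> \<delta> E
        \<le> ennreal (1 / K) * (ennreal K * (\<Sum>i. hcost (phio \<phi> CARD('n)) (C i)))"
      by (rule mult_left_mono[OF H]) simp
    also have "\<dots> = (ennreal (1 / K) * ennreal K) * (\<Sum>i. hcost (phio \<phi> CARD('n)) (C i))"
      by (simp only: mult.assoc)
    also have "ennreal (1 / K) * ennreal K = 1"
      using Kpos by (simp add: ennreal_mult[symmetric])
    also have "1 * (\<Sum>i. hcost (phio \<phi> CARD('n)) (C i)) = (\<Sum>i. hcost (phio \<phi> CARD('n)) (C i))" by simp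
    finally show "ennreal (1 / K) * hausdorff_content \<phi> \<delta> E \<le> (\<Sum>i. hcost (phio \<phi> CARD('n)) (C i))" .
  qed
qed

theorem lemma2p1:
  "\<exists>c::real. c > 0 \<and>
     (\<forall>\<phi>. gauge_fun \<phi> \<and>
          Liminf (at_right 0) (\<lambda>r. ereal (\<phi> r / r ^ CARD('n))) > 0 \<longrightarrow>
        (\<exists>\<phi>\<^sub>0. gauge_fun \<phi>\<^sub>0 \<and>
           antimono_on {0<..} (\<lambda>r. \<phi>\<^sub>0 r / r ^ CARD('n)) \<and>
           (\<forall>\<delta>::ereal. \<forall>E :: (real ^ 'n::finite) set. \<delta> > 0 \<longrightarrow>
              ennreal c * hausdorff_content \<phi> \<delta> E \<le> hausdorff_content \<phi>\<^sub>0 \<delta> E \<and>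
              hausdorff_content \<phi>\<^sub>0 \<delta> E \<le> hausdorff_content \<phi> \<delta> E)))"
proof (rule exI[of _ "1 / (2 * (5 * real CARD('n)) ^ CARD('n))"], rule conjI)
  show "(0::real) < 1 / (2 * (5 * real CARD('n)) ^ CARD('n))" by simp
next
  show "\<forall>\<phi>. gauge_fun \<phi> \<and>
          Liminf (at_right 0) (\<lambda>r. ereal (\<phi> r / r ^ CARD('n))) > 0 \<longrightarrow>
        (\<exists>\<phi>\<^sub>0. gauge_fun \<phi>\<^sub>0 \<and>
           antimono_on {0<..} (\<lambda>r. \<phi>\<^sub>0 r / r ^ CARD('n)) \<and>
           (\<forall>\<delta>::ereal. \<forall>E :: (real ^ 'n::finite) set. \<delta> > 0 \<longrightarrow>
              ennreal (1 / (2 * (5 * real CARD('n)) ^ CARD('n))) * hausdorff_content \<phi> \<delta> E \<le> hausdorff_content \<phi>\<^sub>0 \<delta> E \<and>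
              hausdorff_content \<phi>\<^sub>0 \<delta> E \<le> hausdorff_content \<phi> \<delta> E))"
  proof (intro allI impI)
  fix \<phi> :: "real \<Rightarrow> real"
  assume A: "gauge_fun \<phi> \<and> Liminf (at_right 0) (\<lambda>r. ereal (\<phi> r / r ^ CARD('n))) > 0"
  then have g: "gauge_fun \<phi>" by blast
  have pos: "\<And>d. d > 0 \<Longrightarrow> mm \<phi> CARD('n) d > 0" using mm_pos[OF g] A by blast
  show "\<exists>\<phi>\<^sub>0. gauge_fun \<phi>\<^sub>0 \<and>
           antimono_on {0<..} (\<lambda>r. \<phi>\<^sub>0 r / r ^ CARD('n)) \<and>
           (\<forall>\<delta>::ereal. \<forall>E :: (real ^ 'n::finite) set. \<delta> > 0 \<longrightarrow>
              ennreal (1 / (2 * (5 * real CARD('n)) ^ CARD('n))) * hausdorff_content \<phi> \<delta> E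
                \<le> hausdorff_content \<phi>\<^sub>0 \<delta> E \<and>
              hausdorff_content \<phi>\<^sub>0 \<delta> E \<le> hausdorff_content \<phi> \<delta> E)"
  proof (rule exI[of _ "phio \<phi> CARD('n)"], intro conjI allI impI)
    show "gauge_fun (phio \<phi> CARD('n))" by (rule phio_gauge[OF g])
  next
    show "antimono_on {0<..} (\<lambda>r. phio \<phi> CARD('n) r / r ^ CARD('n))" by (rule phio_anti[OF g])
  next
    fix \<delta> :: ereal and E :: "(real^'n) set"
    assume "\<delta> > 0"
    show "ennreal (1 / (2 * (5 * real CARD('n)) ^ CARD('n))) * hausdorff_content \<phi> \<delta> E
        \<le> hausdorff_content (phio \<phi> CARD('n)) \<delta> E" by (rule lower_bound[OF g pos])
  next
    fix \<delta> :: ereal and E :: "(real^'n) set"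
    assume "\<delta> > 0"
    show "hausdorff_content (phio \<phi> CARD('n)) \<delta> E \<le> hausdorff_content \<phi> \<delta> E"
      by (rule content_mono) (use phio_le[OF g] in auto)
  qed
  qed
qed

end
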